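(* For every integer $n>0$ there is a normal proof of $\varphi_n$ in Prawitz-style Natural Deduction for $\mathbf{M}_{\rightarrow}$ that has exactly $2^n$ assumption occurrences of the formula $\xi_n$, all of which are discharged by the last inference (an $\rightarrow$-Introduction) of the proof.
   Context: $\mathbf{M}_{\rightarrow}$ is purely implicational minimal propositional logic: formulas are built from propositional letters using only $\rightarrow$; there is no $\bot$. Its Natural Deduction system (Prawitz style) has only two rules: $\rightarrow$-Introduction (from a derivation of $\beta$, possibly using assumptions $\alpha$, infer $\alpha\rightarrow\beta$, discharging any number, possibly zero, of occurrences of the assumption $\alpha$) and $\rightarrow$-Elimination (from $\alpha$ and $\alpha\rightarrow\beta$ infer $\beta$; $\alpha\rightarrow\beta$ is the major premise). A proof is a derivation with no open assumptions. A derivation is normal if no formula occurrence is both the conclusion of an $\rightarrow$-Introduction and the major premise of an $\rightarrow$-Elimination. An assumption occurrence is a leaf of the derivation tree. For formulas $X,Y$ let $\chi[X,Y]=(((X\rightarrow Y)\rightarrow X)\rightarrow X)\rightarrow Y$. Let $C$ and $D_1,D_2,\dots$ be distinct propositional letters. Define $\xi_1=\chi[D_1,C]$, $\xi_{i+1}=\chi[D_{i+1},\xi_i]$ for $i\ge 1$, and $\varphi_i=\xi_i\rightarrow C$ for $i\ge 1$. *)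

theory Defs
  imports Main
begin

datatype form = Atom nat | Imp form form  (infixr "\<rightarrow>\<^sub>f" 25)

definition C :: form where "C = Atom 0"
definition D :: "nat \<Rightarrow> form" where "D i = Atom i"

definition chi :: "form \<Rightarrow> form \<Rightarrow> form" where
  "chi X Y = ((((X \<rightarrow>\<^sub>f Y) \<rightarrow>\<^sub>f X) \<rightarrow>\<^sub>f X) \<rightarrow>\<^sub>f Y)"

fun xi :: "nat \<Rightarrow> form" where
  "xi 0 = C"  (* unused junk value; the paper's xi starts at index 1 *)
| "xi (Suc 0) = chi (D 1) C"
| "xi (Suc (Suc i)) = chi (D (Suc (Suc i))) (xi (Suc i))"

definition phi :: "nat \<Rightarrow> form" where "phi i = (xi i \<rightarrow>\<^sub>f C)"

text \<open>Assumption occurrences carry a discharge label; an \<open>\<rightarrow>\<close>-introduction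
  \<open>ImpI A l d\<close> discharges exactly the assumption occurrences of \<open>A\<close> with
  label \<open>l\<close> that are open in \<open>d\<close> (possibly none: vacuous discharge).
  \<open>ImpE d1 d2\<close>: minor premise derivation d1, major premise derivation d2.\<close>
datatype deriv = Ass form nat | ImpI form nat deriv | ImpE deriv deriv

fun concl :: "deriv \<Rightarrow> form" where
  "concl (Ass A l) = A"
| "concl (ImpI A l d) = (A \<rightarrow>\<^sub>f concl d)"
| "concl (ImpE d1 d2) = (case concl d2 of Imp a b \<Rightarrow> b | Atom n \<Rightarrow> Atom n)"

fun wf :: "deriv \<Rightarrow> bool" where
  "wf (Ass A l) = True"
| "wf (ImpI A l d) = wf d"
| "wf (ImpE d1 d2) = (wf d1 \<and> wf d2 \<and> (\<exists>B. concl d2 = (concl d1 \<rightarrow>\<^sub>f B)))"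

fun leaves :: "deriv \<Rightarrow> (form \<times> nat) list" where
  "leaves (Ass A l) = [(A, l)]"
| "leaves (ImpI A l d) = leaves d"
| "leaves (ImpE d1 d2) = leaves d1 @ leaves d2"

fun open_ass :: "deriv \<Rightarrow> (form \<times> nat) list" where
  "open_ass (Ass A l) = [(A, l)]"
| "open_ass (ImpI A l d) = filter (\<lambda>x. x \<noteq> (A, l)) (open_ass d)"
| "open_ass (ImpE d1 d2) = open_ass d1 @ open_ass d2"

definition is_proof :: "deriv \<Rightarrow> bool" where
  "is_proof d \<longleftrightarrow> wf d \<and> open_ass d = []"

fun normal :: "deriv \<Rightarrow> bool" where
  "normal (Ass A l) = True"
| "normal (ImpI A l d) = normal d"
| "normal (ImpE d1 d2) = (normal d1 \<and> normal d2 \<and> (\<forall>A l d. d2 \<noteq> ImpI A l d))"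

end

theory Submission
  imports Defs
begin

definition stp :: "form \<Rightarrow> form \<Rightarrow> deriv \<Rightarrow> deriv" where
"stp X Y x = ImpE (ImpI ((X \<rightarrow>\<^sub>f Y) \<rightarrow>\<^sub>f X) 1 (ImpE (ImpI X 1 (ImpE (ImpI ((X \<rightarrow>\<^sub>f Y) \<rightarrow>\<^sub>f X) 1 (Ass X 1)) x))
   (Ass ((X \<rightarrow>\<^sub>f Y) \<rightarrow>\<^sub>f X) 1))) x"

fun xc :: "nat \<Rightarrow> form" where
  "xc 0 = C" | "xc (Suc i) = xi (Suc i)"

lemma xi_Suc: "xi (Suc i) = chi (D (Suc i)) (xc i)"
  by (cases i) auto

lemma xc_not: "xc j \<noteq> Atom (Suc k)"
  by (cases j; cases "j - 1") (auto simp: C_def chi_def)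

fun E :: "nat \<Rightarrow> nat \<Rightarrow> deriv" where
  "E n 0 = Ass (xi n) 0"
| "E n (Suc m) = stp (D (n - m)) (xc (n - m - 1)) (E n m)"

lemma E_props:
  assumes "m \<le> n" "n > 0"
  shows "wf (E n m) \<and> concl (E n m) = xc (n - m) \<and> normal (E n m) \<and> (\<forall>A l d. E n m \<noteq> ImpI A l d)
    \<and> open_ass (E n m) = replicate (2^m) (xi n, 0)
    \<and> length (filter (\<lambda>(A, k). A = xi n) (leaves (E n m))) = 2 ^ m"
  using assms
proof (induction m)
  case 0
  then show ?case by (cases n) auto
next
  case (Suc m)
  then have IH: "wf (E n m) \<and> concl (E n m) = xc (n - m) \<and> normal (E n m) \<and> (\<forall>A l d. E n m \<noteq> ImpI A l d)
    \<and> open_ass (E n m) = replicate (2^m) (xi n, 0)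
    \<and> length (filter (\<lambda>(A, k). A = xi n) (leaves (E n m))) = 2 ^ m" by simp
  obtain i where i: "n - m = Suc i" using Suc.prems by (metis Suc_diff_le Suc_le_lessD diff_Suc_Suc less_imp_Suc_add)
  have ni: "n - Suc m = i" using i by simp
  have c: "concl (E n m) = chi (D (Suc i)) (xc i)" using IH i by (simp add: xi_Suc)
  have neq1: "xi n \<noteq> ((D (Suc i) \<rightarrow>\<^sub>f xc i) \<rightarrow>\<^sub>f D (Suc i))"
    using Suc.prems xi_Suc[of "n - 1"] xc_not by (auto simp: chi_def D_def)
  have neq2: "xi n \<noteq> D (Suc i)"
    using Suc.prems xi_Suc[of "n - 1"] by (auto simp: chi_def D_def)
  have f: "filter (\<lambda>x. x \<noteq> (A, Suc 0)) (replicate k (xi n, 0)) = replicate k (xi n, 0)" for A k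
    by (induction k) auto
  have e: "E n (Suc m) = stp (D (Suc i)) (xc i) (E n m)" using i ni by simp
  have r: "replicate (2 ^ Suc m) (xi n, 0) = replicate (2^m) (xi n, 0) @ replicate (2^m) (xi n, 0)"
    by (simp add: replicate_add[symmetric] mult_2)
  have IH': "wf (E n m)" "normal (E n m)" "\<forall>A l d. E n m \<noteq> ImpI A l d"
    "open_ass (E n m) = replicate (2^m) (xi n, 0)"
    "length (filter (\<lambda>(A, k). A = xi n) (leaves (E n m))) = 2 ^ m" using IH by auto
  show ?case unfolding e r ni using IH' c neq1 neq2
    by (simp add: stp_def chi_def f)
qed

theorem mainTheorem2:
  fixes n :: nat
  assumes "n > 0"
  shows "\<exists>d l. is_proof (ImpI (xi n) l d) \<and> normal (ImpI (xi n) l d)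
            \<and> concl (ImpI (xi n) l d) = phi n
            \<and> length (filter (\<lambda>(A, k). A = xi n) (leaves d)) = 2 ^ n
            \<and> length (filter (\<lambda>x. x = (xi n, l)) (open_ass d)) = 2 ^ n"
proof -
  have P: "wf (E n n) \<and> concl (E n n) = xc 0 \<and> normal (E n n) \<and> (\<forall>A l d. E n n \<noteq> ImpI A l d)
    \<and> open_ass (E n n) = replicate (2^n) (xi n, 0)
    \<and> length (filter (\<lambda>(A, k). A = xi n) (leaves (E n n))) = 2 ^ n"
    using E_props[of n n] assms by simp
  have f: "filter (\<lambda>x. x \<noteq> (xi n, 0)) (replicate k (xi n, 0)) = []" for k
    by (induction k) auto
  have g: "length (filter (\<lambda>x. x = (xi n, 0)) (replicate k (xi n, 0))) = k" for k
    by (induction k) auto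
  show ?thesis
    apply (rule exI[of _ "E n n"], rule exI[of _ 0])
    using P f g by (simp add: is_proof_def phi_def)
qed

end
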